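(* Let $0\le a<b<1$ and let $\varrho\ge0$ be a function on $[a,b]$ such that $\varrho/\zeta$ is non-decreasing and bounded on $[a,b]$. Then (i) $$\big(b\zeta(b)-a\zeta(a)\big)\,\hat m(\varrho/\zeta,a,b)\le 2+a\widetilde\varrho(a+)+b\widetilde\varrho(b-),$$ and (ii) equality holds in (i) if and only if $\varrho\equiv0$ on $[a,b)$.
   Context: $\zeta(t)=\frac{2}{1-t^2}$, $\hat\varrho(t)=t\zeta(t)$ (so $\hat\varrho=\zeta'/\zeta$), and $\widetilde\varrho=\hat\varrho+\varrho$; $\widetilde\varrho(a+)=a\zeta(a)+\lim_{t\downarrow a}\varrho(t)$ and $\widetilde\varrho(b-)=b\zeta(b)+\lim_{t\uparrow b}\varrho(t)$. With $h$ a primitive of $\varrho$, $\psi=e^h$, $\mathtt f(x)=x\zeta(x)^2\psi(x)$, $\mathtt g(x)=x\zeta(x)\psi(x)$, define $\hat m(\varrho/\zeta,a,b):=\frac{\mathtt g(a)+\mathtt g(b)}{\int_a^b\mathtt f\,dt}$. *)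

theory Defs
  imports "HOL-Analysis.Analysis"
begin

definition zeta :: "real \<Rightarrow> real" where
  "zeta t = 2 / (1 - t\<^sup>2)"

definition rho_hat :: "real \<Rightarrow> real" where
  "rho_hat t = t * zeta t"

text \<open>One-sided limits of rho_tilde = rho_hat + rho at the endpoints.\<close>
definition rho_tilde_right :: "(real \<Rightarrow> real) \<Rightarrow> real \<Rightarrow> real" where
  "rho_tilde_right rho a = a * zeta a + Lim (at_right a) rho"

definition rho_tilde_left :: "(real \<Rightarrow> real) \<Rightarrow> real \<Rightarrow> real" where
  "rho_tilde_left rho b = b * zeta b + Lim (at_left b) rho"

text \<open>m_hat takes q = rho/zeta as argument; rho = q * zeta.
  The primitive h of rho is taken as h x = integral over [a,x] of rho
  (the quotient does not depend on the additive constant).\<close>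
definition mhat :: "(real \<Rightarrow> real) \<Rightarrow> real \<Rightarrow> real \<Rightarrow> real" where
  "mhat q a b =
    (let rho = (\<lambda>t. q t * zeta t);
         psi = (\<lambda>x. exp (integral {a..x} rho));
         f = (\<lambda>x. x * (zeta x)\<^sup>2 * psi x);
         g = (\<lambda>x. x * zeta x * psi x)
     in (g a + g b) / integral {a..b} f)"

end

theory Submission imports Defs begin

lemma zeta_pos: "\<bar>t\<bar> < 1 \<Longrightarrow> 0 < zeta (t::real)"
proof -
  assume "\<bar>t\<bar> < 1"
  then have "t^2 < 1" by (simp add: abs_square_less_1)
  then show ?thesis by (simp add: zeta_def)
qed

lemma zeta_sq: "\<bar>t\<bar> < 1 \<Longrightarrow> t^2 * zeta (t::real) = zeta t - 2"
proof -
  assume "\<bar>t\<bar> < 1"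
  then have "t^2 < 1" by (simp add: abs_square_less_1)
  then show ?thesis by (simp add: zeta_def field_simps)
qed

lemma zeta_sq2: "\<bar>t\<bar> < 1 \<Longrightarrow> (t * zeta (t::real))^2 = (zeta t)^2 - 2 * zeta t"
proof -
  assume h: "\<bar>t\<bar> < 1"
  have "(t * zeta t)^2 = zeta t * (t^2 * zeta t)" by (simp add: power2_eq_square)
  also have "\<dots> = zeta t * (zeta t - 2)" using zeta_sq[OF h] by simp
  also have "\<dots> = (zeta t)^2 - 2 * zeta t" by (simp add: power2_eq_square algebra_simps)
  finally show ?thesis .
qed

lemma zeta_mono: "0 \<le> s \<Longrightarrow> s \<le> t \<Longrightarrow> t < 1 \<Longrightarrow> zeta s \<le> zeta (t::real)"
proof -
  assume h: "0 \<le> s" "s \<le> t" "t < 1"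
  have "s^2 \<le> t^2" using h by (simp add: power_mono)
  moreover have "t^2 < 1" using h by (simp add: abs_square_less_1)
  ultimately show ?thesis unfolding zeta_def by (intro divide_left_mono) (auto simp: mult_pos_pos)
qed

lemma zeta_deriv: "\<bar>t\<bar> < 1 \<Longrightarrow> (zeta has_real_derivative t * (zeta t)^2) (at (t::real))"
proof -
  assume "\<bar>t\<bar> < 1"
  then have "t^2 < 1" by (simp add: abs_square_less_1)
  then have ne: "1 - t^2 \<noteq> 0" by simp
  have "((\<lambda>t. 2 / (1 - t^2)) has_real_derivative t * (2/(1-t^2))^2) (at t)"
    by (rule derivative_eq_intros refl | use ne in \<open>simp add: field_simps power2_eq_square\<close>)+
  then show ?thesis unfolding zeta_def[abs_def] by simp
qed

lemma S_mono: "0 \<le> s \<Longrightarrow> s \<le> t \<Longrightarrow> t < 1 \<Longrightarrow> s * zeta s \<le> t * zeta (t::real)"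
proof -
  assume h: "0 \<le> s" "s \<le> t" "t < 1"
  have "zeta s \<le> zeta t" using zeta_mono h by blast
  moreover have "0 < zeta s" using h by (intro zeta_pos) auto
  ultimately show ?thesis using h by (intro mult_mono) auto
qed

lemma frac_aux:
  fixes A B T x1 x2 x3 x4 x5 x6 :: real
  assumes "A \<noteq> 0" "B \<noteq> 0" "T \<noteq> 0"
  shows "(x1/B)*(x2/T) - ((x3/(A*B))*(x4/(T*B)) + (x5/(A*B))*(x6/B)) = (x1*x2*A*B - (x3*x4 + x5*x6*T))/(A*B*B*T)"
  using assms by (simp add: field_simps)

lemma key_poly:
  fixes a b t :: real
  assumes "0 \<le> a" "a \<le> b" "b < 1" "0 \<le> t" "t \<le> b"
  shows "(b*zeta b) * (t * zeta t) - ((zeta a + zeta b - 2) * (zeta t - zeta b) + (b*zeta b - a*zeta a) * (b*zeta b))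
         = 4 * ((b - t) * (a^2*b + t) + a*b*(1 - t^2)) / ((1-a^2)*(1-b^2)*(1-t^2))"
proof -
  have "a^2 < 1" "b^2 < 1" "t^2 < 1" using assms by (simp_all add: abs_square_less_1)
  define A where "A = 1 - a^2"
  define B where "B = 1 - b^2"
  define T where "T = 1 - t^2"
  have nz: "A \<noteq> 0" "B \<noteq> 0" "T \<noteq> 0" using \<open>a^2<1\<close> \<open>b^2<1\<close> \<open>t^2<1\<close> by (auto simp: A_def B_def T_def)
  have e: "a^2 = 1 - A" "b^2 = 1 - B" "t^2 = 1 - T" by (auto simp: A_def B_def T_def)
  have ze: "zeta a = 2/A" "zeta b = 2/B" "zeta t = 2/T" by (auto simp: zeta_def A_def B_def T_def)
  have "(b*zeta b) * (t * zeta t) - ((zeta a + zeta b - 2) * (zeta t - zeta b) + (b*zeta b - a*zeta a) * (b*zeta b))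
      = (4*b*t*A*B - ((2*B + 2*A - 2*A*B) * (2*B - 2*T) + (2*b*A - 2*a*B) * (2*b*T))) / (A*B*B*T)"
  proof -
    have 1: "zeta a + zeta b - 2 = (2*B + 2*A - 2*A*B)/(A*B)" using nz by (simp add: ze field_simps)
    have 2: "zeta t - zeta b = (2*B - 2*T)/(T*B)" using nz by (simp add: ze field_simps)
    have 3: "b*zeta b - a*zeta a = (2*b*A - 2*a*B)/(A*B)" using nz by (simp add: ze field_simps)
    have 4: "b*zeta b = (2*b)/B" "t*zeta t = (2*t)/T" by (simp_all add: ze)
    show ?thesis unfolding 1 2 3 unfolding 4 frac_aux[OF nz]
      by (simp only: mult.assoc[symmetric] mult_numeral_left_semiring_numeral) (simp add: mult_ac)
  qed
  also have "4*b*t*A*B - ((2*B + 2*A - 2*A*B) * (2*B - 2*T) + (2*b*A - 2*a*B) * (2*b*T))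
      = 4 * ((b - t) * (a^2*b + t) + a*b*(1 - t^2)) * B"
    unfolding A_def B_def T_def by (simp add: algebra_simps power2_eq_square)
  also have "4 * ((b - t) * (a^2*b + t) + a*b*(1 - t^2)) * B / (A*B*B*T) = 4 * ((b - t) * (a^2*b + t) + a*b*(1 - t^2)) / (A*B*T)"
    using nz by (simp add: divide_simps)
  finally show ?thesis by (simp only: A_def B_def T_def)
qed


lemma key_ineq:
  fixes a b t :: real
  assumes "0 \<le> a" "a \<le> b" "b < 1" "0 \<le> t" "t \<le> b"
  shows "(zeta a + zeta b - 2) * (zeta t - zeta b) + (b*zeta b - a*zeta a) * (b*zeta b) \<le> (b*zeta b) * (t * zeta t)"
    and "0 < t \<Longrightarrow> t < b \<Longrightarrow> (zeta a + zeta b - 2) * (zeta t - zeta b) + (b*zeta b - a*zeta a) * (b*zeta b) < (b*zeta b) * (t * zeta t)"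
proof -
  have "a^2 < 1" "b^2 < 1" "t^2 < 1" using assms by (simp_all add: abs_square_less_1)
  then have D: "0 < (1-a^2)*(1-b^2)*(1-t^2)" by simp
  have N: "0 \<le> (b - t) * (a^2*b + t) + a*b*(1 - t^2)"
    using assms \<open>t^2<1\<close> by (intro add_nonneg_nonneg mult_nonneg_nonneg) auto
  show "(zeta a + zeta b - 2) * (zeta t - zeta b) + (b*zeta b - a*zeta a) * (b*zeta b) \<le> (b*zeta b) * (t * zeta t)"
    using key_poly[OF assms] D N by (smt (verit) divide_nonneg_pos)
  assume "0 < t" "t < b"
  then have "0 < (b - t) * (a^2*b + t)" using assms by (intro mult_pos_pos) (auto intro: add_nonneg_pos)
  moreover have "0 \<le> a*b*(1 - t^2)" using assms \<open>t^2<1\<close> by auto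
  ultimately have "0 < (b - t) * (a^2*b + t) + a*b*(1 - t^2)" by linarith
  then show "(zeta a + zeta b - 2) * (zeta t - zeta b) + (b*zeta b - a*zeta a) * (b*zeta b) < (b*zeta b) * (t * zeta t)"
    using key_poly[OF assms] D by (smt (verit) divide_pos_pos)
qed

definition Zf :: "real \<Rightarrow> real" where "Zf t = ln (1 + t) - ln (1 - t)"

lemma Zf_deriv: "\<bar>t\<bar> < 1 \<Longrightarrow> (Zf has_real_derivative zeta t) (at (t::real))"
proof -
  assume h: "\<bar>t\<bar> < 1"
  then have p: "0 < 1 + t" "0 < 1 - t" by auto
  have "((\<lambda>t. ln (1 + t) - ln (1 - t)) has_real_derivative (1/(1+t) - (-1)/(1-t))) (at t)"
    by (rule derivative_eq_intros refl | use p in simp)+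
  moreover have "1/(1+t) - (-1)/(1-t) = zeta t" using p unfolding zeta_def
    by (simp add: field_simps power2_eq_square)
  ultimately show ?thesis unfolding Zf_def[abs_def] by simp
qed

lemma zeta_cont: assumes "0 \<le> a" "b < 1" shows "continuous_on {a..b} zeta"
proof -
  have h: "\<forall>x\<in>{a..b}. 1 - x^2 \<noteq> (0::real)"
  proof
    fix x assume "x \<in> {a..b}"
    then have "x^2 < 1" using assms by (simp add: abs_square_less_1)
    then show "1 - x^2 \<noteq> 0" by simp
  qed
  show ?thesis unfolding zeta_def[abs_def] by (intro continuous_intros h)
qed

lemma Zf_cont: "0 \<le> a \<Longrightarrow> b < 1 \<Longrightarrow> continuous_on {a..b} Zf"
  unfolding Zf_def[abs_def] by (intro continuous_intros) auto

lemma zeta_ftc: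
  assumes "0 \<le> x" "x \<le> y" "y < 1"
  shows "((\<lambda>t. t * (zeta t)^2) has_integral (zeta y - zeta x)) {x..y}"
proof (rule fundamental_theorem_of_calculus[OF assms(2)])
  fix t assume "t \<in> {x..y}"
  then have "\<bar>t\<bar> < 1" using assms by auto
  then show "(zeta has_vector_derivative t * (zeta t)^2) (at t within {x..y})"
    using zeta_deriv has_real_derivative_iff_has_vector_derivative has_vector_derivative_at_within by blast
qed

lemma Zf_ftc:
  assumes "0 \<le> x" "x \<le> y" "y < 1"
  shows "(zeta has_integral (Zf y - Zf x)) {x..y}"
proof (rule fundamental_theorem_of_calculus[OF assms(2)])
  fix t assume "t \<in> {x..y}"
  then have "\<bar>t\<bar> < 1" using assms by auto
  then show "(Zf has_vector_derivative zeta t) (at t within {x..y})"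
    using Zf_deriv has_real_derivative_iff_has_vector_derivative has_vector_derivative_at_within by blast
qed


theorem mainTheorem10:
  fixes rho :: "real \<Rightarrow> real" and a b :: real
  assumes "0 \<le> a" and "a < b" and "b < 1"
    and "\<forall>t\<in>{a..b}. 0 \<le> rho t"
    and "mono_on {a..b} (\<lambda>t. rho t / zeta t)"
    and "bounded ((\<lambda>t. rho t / zeta t) ` {a..b})"
  shows "(b * zeta b - a * zeta a) * mhat (\<lambda>t. rho t / zeta t) a b
           \<le> 2 + a * rho_tilde_right rho a + b * rho_tilde_left rho b
       \<and> ((b * zeta b - a * zeta a) * mhat (\<lambda>t. rho t / zeta t) a b
           = 2 + a * rho_tilde_right rho a + b * rho_tilde_left rho b
         \<longleftrightarrow> (\<forall>t\<in>{a..<b}. rho t = 0))"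
proof -
  note a0 = assms(1) and ab = assms(2) and b1 = assms(3) and rnn = assms(4)
  define q where "q = (\<lambda>t. rho t / zeta t)"
  have ab1: "\<And>t. t \<in> {a..b} \<Longrightarrow> \<bar>t\<bar> < 1" using a0 b1 by auto
  have zpos: "\<And>t. t \<in> {a..b} \<Longrightarrow> 0 < zeta t" using zeta_pos ab1 by blast
  have rho_eq: "\<And>t. t \<in> {a..b} \<Longrightarrow> rho t = q t * zeta t"
  proof -
    fix t assume "t \<in> {a..b}"
    then have "zeta t \<noteq> 0" using zpos by (metis less_irrefl)
    then show "rho t = q t * zeta t" unfolding q_def by simp
  qed
  have q_nn: "\<And>t. t \<in> {a..b} \<Longrightarrow> 0 \<le> q t"
    unfolding q_def using zpos rnn by (auto intro!: divide_nonneg_pos)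
  have q_mono: "\<And>s t. s \<in> {a..b} \<Longrightarrow> t \<in> {a..b} \<Longrightarrow> s \<le> t \<Longrightarrow> q s \<le> q t"
    using assms(5) unfolding q_def by (meson mono_onD)
  have bnd: "bounded (q ` {a..b})" using assms(6) unfolding q_def .
  have bddA: "bdd_above (q ` {a..<b})"
    using bounded_imp_bdd_above[OF bnd] by (rule bdd_above_mono) auto
  have bddB: "bdd_below (q ` {a<..b})"
    using bounded_imp_bdd_below[OF bnd] by (rule bdd_below_mono) auto
  define qb where "qb = Sup (q ` {a..<b})"
  define qa where "qa = Inf (q ` {a<..b})"
  have q_le_qb: "\<And>t. t \<in> {a..<b} \<Longrightarrow> q t \<le> qb"
    unfolding qb_def using bddA by (intro cSup_upper) auto
  have qa_le_q: "\<And>t. t \<in> {a<..b} \<Longrightarrow> qa \<le> q t"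
    unfolding qa_def using bddB by (intro cInf_lower) auto
  have qb_nn: "0 \<le> qb" using q_le_qb[of a] q_nn[of a] ab a0 by auto
  have qa_nn: "0 \<le> qa" unfolding qa_def using ab q_nn by (intro cInf_greatest) auto
  have rho_le: "\<And>t. t \<in> {a..<b} \<Longrightarrow> rho t \<le> qb * zeta t"
  proof -
    fix t assume t: "t \<in> {a..<b}"
    then have "rho t = q t * zeta t" using rho_eq by auto
    also have "\<dots> \<le> qb * zeta t" using q_le_qb[OF t] zpos[of t] t by (intro mult_right_mono) auto
    finally show "rho t \<le> qb * zeta t" .
  qed
  have zcont: "continuous_on {a..b} zeta" using zeta_cont a0 b1 by blast
  have limb: "(rho \<longlongrightarrow> qb * zeta b) (at_left b)"
  proof -
    have "(q \<longlongrightarrow> qb) (at_left b)"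
    proof (rule increasing_tendsto)
      show "\<forall>\<^sub>F n in at_left b. q n \<le> qb"
        using eventually_at_left_real[OF ab] by eventually_elim (auto intro: q_le_qb)
    next
      fix x assume "x < qb"
      then obtain t0 where t0: "t0 \<in> {a..<b}" "x < q t0"
        unfolding qb_def using bddA ab by (subst (asm) less_cSup_iff) auto
      then have "t0 < b" by auto
      show "\<forall>\<^sub>F n in at_left b. x < q n"
        using eventually_at_left_real[OF \<open>t0 < b\<close>]
      proof eventually_elim
        case (elim n)
        then have "q t0 \<le> q n" using t0 by (intro q_mono) auto
        then show ?case using t0 by auto
      qed
    qed
    moreover have "(zeta \<longlongrightarrow> zeta b) (at_left b)"
    proof -
      have "isCont zeta b" using zeta_deriv[of b] ab1[of b] ab
        by (auto intro: DERIV_isCont)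
      then show ?thesis unfolding isCont_def by (rule tendsto_mono[OF at_le, rotated]) auto
    qed
    ultimately have "((\<lambda>t. q t * zeta t) \<longlongrightarrow> qb * zeta b) (at_left b)" by (rule tendsto_mult)
    moreover have "\<forall>\<^sub>F t in at_left b. q t * zeta t = rho t"
      using eventually_at_left_real[OF ab] by eventually_elim (auto simp: rho_eq)
    ultimately show ?thesis by (rule Lim_transform_eventually)
  qed
  have Lb: "Lim (at_left b) rho = qb * zeta b"
    using limb by (intro tendsto_Lim) auto
  have lima: "(rho \<longlongrightarrow> qa * zeta a) (at_right a)"
  proof -
    have "(q \<longlongrightarrow> qa) (at_right a)"
    proof (rule decreasing_tendsto)
      show "\<forall>\<^sub>F n in at_right a. qa \<le> q n"
        using eventually_at_right_real[OF ab] by eventually_elim (auto intro: qa_le_q)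
    next
      fix x assume "qa < x"
      then obtain t0 where t0: "t0 \<in> {a<..b}" "q t0 < x"
        unfolding qa_def using bddB ab by (subst (asm) cInf_less_iff) auto
      then have "a < t0" by auto
      show "\<forall>\<^sub>F n in at_right a. q n < x"
        using eventually_at_right_real[OF \<open>a < t0\<close>]
      proof eventually_elim
        case (elim n)
        then have "q n \<le> q t0" using t0 by (intro q_mono) auto
        then show ?case using t0 by auto
      qed
    qed
    moreover have "(zeta \<longlongrightarrow> zeta a) (at_right a)"
    proof -
      have "isCont zeta a" using zeta_deriv[of a] ab1[of a] ab
        by (auto intro: DERIV_isCont)
      then show ?thesis unfolding isCont_def by (rule tendsto_mono[OF at_le, rotated]) auto
    qed
    ultimately have "((\<lambda>t. q t * zeta t) \<longlongrightarrow> qa * zeta a) (at_right a)" by (rule tendsto_mult)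
    moreover have "\<forall>\<^sub>F t in at_right a. q t * zeta t = rho t"
      using eventually_at_right_real[OF ab] by eventually_elim (auto simp: rho_eq)
    ultimately show ?thesis by (rule Lim_transform_eventually)
  qed
  have La: "Lim (at_right a) rho = qa * zeta a"
    using lima by (intro tendsto_Lim) auto
  have rho_mono: "mono_on {a..b} rho"
  proof (rule mono_onI)
    fix s t assume st: "s \<in> {a..b}" "t \<in> {a..b}" "s \<le> t"
    have "rho s = q s * zeta s" using rho_eq st by auto
    also have "\<dots> \<le> q t * zeta s" using q_mono[OF st] zpos[of s] st by (intro mult_right_mono) auto
    also have "\<dots> \<le> q t * zeta t" using q_nn[of t] st zeta_mono[of s t] a0 b1
      by (intro mult_left_mono) auto
    also have "\<dots> = rho t" using rho_eq st by auto
    finally show "rho s \<le> rho t" .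
  qed
  have rho_int: "rho integrable_on {a..b}" using rho_mono by (rule integrable_on_mono_on)
  define H where "H = (\<lambda>x. integral {a..x} rho)"
  have H_cont: "continuous_on {a..b} H" unfolding H_def using rho_int by (rule indefinite_integral_continuous_1)
  have H_nn: "\<And>x. x \<in> {a..b} \<Longrightarrow> 0 \<le> H x"
    unfolding H_def using rnn by (intro integral_nonneg integrable_on_subinterval[OF rho_int]) auto
  define P where "P = exp (H b)"
  define fI where "fI = (\<lambda>x. x * (zeta x)^2 * exp (H x))"
  have fI_cont: "continuous_on {a..b} fI"
    unfolding fI_def by (intro continuous_intros zcont H_cont)
  have fI_int: "\<And>c d. a \<le> c \<Longrightarrow> d \<le> b \<Longrightarrow> fI integrable_on {c..d}"
    using fI_cont by (intro integrable_continuous_interval) (auto elim: continuous_on_subset)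
  define I where "I = integral {a..b} fI"
  define Sa where "Sa = a * zeta a"
  define Sb where "Sb = b * zeta b"
  define Bc where "Bc = zeta a + zeta b - 2"
  define R0 where "R0 = Bc + b * (qb * zeta b)"
  have mh: "mhat (\<lambda>t. rho t / zeta t) a b = (Sa + Sb * P) / I"
  proof -
    have e1: "\<And>x. x \<in> {a..b} \<Longrightarrow> integral {a..x} (\<lambda>t. rho t / zeta t * zeta t) = H x"
    proof -
      fix x assume x: "x \<in> {a..b}"
      show "integral {a..x} (\<lambda>t. rho t / zeta t * zeta t) = H x" unfolding H_def
      proof (rule integral_cong)
        fix t assume "t \<in> {a..x}"
        then have "zeta t \<noteq> 0" using zpos x by (metis atLeastAtMost_iff less_irrefl order_trans)
        then show "rho t / zeta t * zeta t = rho t" by simp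
      qed
    qed
    have "integral {a..b} (\<lambda>x. x * (zeta x)^2 * exp (integral {a..x} (\<lambda>t. rho t / zeta t * zeta t))) = I"
      unfolding I_def fI_def using e1 by (intro integral_cong) auto
    moreover have "integral {a..b} (\<lambda>t. rho t / zeta t * zeta t) = H b" using e1 ab by auto
    ultimately show ?thesis unfolding mhat_def Let_def Sa_def Sb_def P_def by simp
  qed
  have b0: "0 < b" using a0 ab by linarith
  have za: "0 < zeta a" and zb: "0 < zeta b" using zpos ab by auto
  have zab: "zeta a \<le> zeta b" using zeta_mono[of a b] a0 ab b1 by auto
  have Sb_pos: "0 < Sb" unfolding Sb_def using b0 zb by simp
  have Sa_nn: "0 \<le> Sa" unfolding Sa_def using a0 za by simp
  have Sa_lt: "Sa < Sb"
  proof -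
    have "a * zeta a \<le> a * zeta b" using zab a0 by (rule mult_left_mono)
    also have "\<dots> < b * zeta b" using ab zb by simp
    finally show ?thesis unfolding Sa_def Sb_def .
  qed
  have idt: "Bc * (zeta a - zeta b) = Sa^2 - Sb^2"
  proof -
    have "Sa^2 = (zeta a)^2 - 2 * zeta a" unfolding Sa_def using zeta_sq2 ab1[of a] ab by auto
    moreover have "Sb^2 = (zeta b)^2 - 2 * zeta b" unfolding Sb_def using zeta_sq2 ab1[of b] ab by auto
    ultimately show ?thesis unfolding Bc_def by (simp add: algebra_simps power2_eq_square)
  qed
  have Bc_eq: "Bc = 2 + a^2 * zeta a + b^2 * zeta b"
    unfolding Bc_def using zeta_sq ab1[of a] ab1[of b] ab by auto
  have Bc_pos: "0 < Bc" unfolding Bc_eq using za zb by (simp add: add_pos_nonneg)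
  have R0_ge: "Bc \<le> R0" unfolding R0_def using b0 qb_nn zb by simp
  have R0_pos: "0 < R0" using Bc_pos R0_ge by linarith
  define Psi where "Psi = (\<lambda>t. Bc * (zeta t - zeta b) + (Sb - Sa) * Sb)"
  have Psi_a: "Psi a = Sa * (Sa - Sb)" unfolding Psi_def using idt by (simp add: algebra_simps power2_eq_square)
  have Psi_b: "Psi b = (Sb - Sa) * Sb" unfolding Psi_def by simp
  have Psi_cont: "continuous_on {a..b} Psi" unfolding Psi_def by (intro continuous_intros zcont)
  obtain c where c: "a \<le> c" "c \<le> b" "Psi c = 0"
    using IVT'[of Psi a 0 b] Psi_a Psi_b Psi_cont Sa_nn Sa_lt Sb_pos ab
    by (auto simp: mult_nonneg_nonpos mult_pos_pos)
  have cb: "c < b"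
  proof (rule ccontr)
    assume "\<not> c < b" then have "c = b" using c by auto
    then show False using c Psi_b Sa_lt Sb_pos by simp
  qed
  have c0: "0 \<le> c" using c a0 by linarith
  have intA: "zeta c - zeta a \<le> integral {a..c} fI"
  proof -
    have hi: "((\<lambda>t. t * (zeta t)^2) has_integral (zeta c - zeta a)) {a..c}"
      using zeta_ftc[of a c] a0 c b1 by auto
    have "integral {a..c} (\<lambda>t. t * (zeta t)^2) \<le> integral {a..c} fI"
    proof (rule integral_le)
      show "(\<lambda>t. t * (zeta t)^2) integrable_on {a..c}" using hi by blast
      show "fI integrable_on {a..c}" using fI_int c by auto
      fix t assume t: "t \<in> {a..c}"
      then have "0 \<le> H t" using H_nn c by auto
      then have "1 \<le> exp (H t)" by simp
      moreover have "0 \<le> t * (zeta t)^2" using t a0 by simp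
      ultimately show "t * (zeta t)^2 \<le> fI t" unfolding fI_def
        using mult_left_mono by fastforce
    qed
    then show ?thesis using integral_unique[OF hi] by simp
  qed
  define m where "m = (\<lambda>t. exp (qb * (Zf t - Zf b)))"
  have m_pos: "\<And>t. 0 < m t" unfolding m_def by simp
  have psi_ge: "\<And>t. t \<in> {c..b} \<Longrightarrow> P * m t \<le> exp (H t)"
  proof -
    fix t assume t: "t \<in> {c..b}"
    then have ta: "a \<le> t" "t \<le> b" using c by auto
    have comb: "H t + integral {t..b} rho = H b"
      unfolding H_def using ta rho_int by (intro Henstock_Kurzweil_Integration.integral_combine) auto
    have rho_tb: "rho integrable_on {t..b}" by (rule integrable_subinterval_real[OF rho_int]) (use ta in auto)
    have e: "integral {t..b} rho = integral {t..b} (\<lambda>s. min (rho s) (qb * zeta s))"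
    proof (rule integral_spike[of "{b}"])
      show "negligible {b}" by auto
      fix x assume "x \<in> {t..b} - {b}"
      then show "min (rho x) (qb * zeta x) = rho x" using rho_le[of x] ta by auto
    qed
    have mint: "(\<lambda>s. min (rho s) (qb * zeta s)) integrable_on {t..b}"
    proof (rule integrable_spike[OF rho_tb, of "{b}"])
      show "negligible {b}" by auto
      fix x assume "x \<in> {t..b} - {b}"
      then show "min (rho x) (qb * zeta x) = rho x" using rho_le[of x] ta by auto
    qed
    have hz: "((\<lambda>s. qb * zeta s) has_integral (qb * (Zf b - Zf t))) {t..b}"
      using has_integral_mult_right[OF Zf_ftc[of t b]] ta a0 b1 by auto
    have "integral {t..b} rho \<le> integral {t..b} (\<lambda>s. qb * zeta s)"
      unfolding e by (rule integral_le[OF mint]) (use hz in auto)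
    then have "integral {t..b} rho \<le> qb * (Zf b - Zf t)" using integral_unique[OF hz] by (rule ord_le_eq_trans)
    then have "H b + qb * (Zf t - Zf b) \<le> H t" using comb by (simp add: algebra_simps)
    then have "exp (H b + qb * (Zf t - Zf b)) \<le> exp (H t)" by simp
    then show "P * m t \<le> exp (H t)" unfolding P_def m_def by (simp add: exp_add)
  qed
  define F' where "F' = (\<lambda>t. (Bc * (t * (zeta t)^2) + Psi t * (qb * zeta t)) * m t)"
  have Fder: "\<And>t. t \<in> {c..b} \<Longrightarrow> ((\<lambda>t. Psi t * m t) has_real_derivative F' t) (at t)"
  proof -
    fix t assume t: "t \<in> {c..b}"
    then have t1: "\<bar>t\<bar> < 1" using c0 b1 by auto
    have d1: "(Psi has_real_derivative Bc * (t * (zeta t)^2 - 0) + 0) (at t)"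
      unfolding Psi_def by (intro DERIV_add DERIV_cmult DERIV_diff zeta_deriv[OF t1] DERIV_const)
    have d2: "(m has_real_derivative m t * (qb * (zeta t - 0))) (at t)"
      unfolding m_def by (intro DERIV_fun_exp DERIV_cmult DERIV_diff Zf_deriv[OF t1] DERIV_const)
    have "((\<lambda>t. Psi t * m t) has_real_derivative (Bc * (t * (zeta t)^2 - 0) + 0) * m t + m t * (qb * (zeta t - 0)) * Psi t) (at t)"
      by (rule DERIV_mult[OF d1 d2])
    moreover have "(Bc * (t * (zeta t)^2 - 0) + 0) * m t + m t * (qb * (zeta t - 0)) * Psi t = F' t"
      unfolding F'_def by (simp add: algebra_simps)
    ultimately show "((\<lambda>t. Psi t * m t) has_real_derivative F' t) (at t)" by simp
  qed
  have FTC: "(F' has_integral Psi b) {c..b}"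
  proof -
    have "(F' has_integral (Psi b * m b - Psi c * m c)) {c..b}"
    proof (rule fundamental_theorem_of_calculus)
      show "c \<le> b" using cb by simp
      fix t assume "t \<in> {c..b}"
      then show "((\<lambda>t. Psi t * m t) has_vector_derivative F' t) (at t within {c..b})"
        using Fder has_real_derivative_iff_has_vector_derivative has_vector_derivative_at_within by blast
    qed
    moreover have "m b = 1" unfolding m_def by simp
    ultimately show ?thesis using c by simp
  qed
  have pt: "\<And>t. t \<in> {c..b} \<Longrightarrow> F' t \<le> R0 * (t * (zeta t)^2) * m t"
   and pts: "\<And>t. 0 < qb \<Longrightarrow> t \<in> {c<..<b} \<Longrightarrow> F' t < R0 * (t * (zeta t)^2) * m t"
  proof -
    have eqR: "\<And>t. R0 * (t * (zeta t)^2) * m t = (Bc * (t * (zeta t)^2) + (qb * zeta t) * (Sb * (t * zeta t))) * m t"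
      unfolding R0_def Sb_def by (simp add: algebra_simps power2_eq_square)
    have eqF: "\<And>t. F' t = (Bc * (t * (zeta t)^2) + (qb * zeta t) * Psi t) * m t"
      unfolding F'_def by (simp add: algebra_simps)
    {
      fix t assume t: "t \<in> {c..b}"
      have "Psi t \<le> Sb * (t * zeta t)"
        using key_ineq(1)[of a b t] a0 ab b1 t c c0 unfolding Psi_def Bc_def Sb_def Sa_def by (auto simp: mult.commute)
      moreover have "0 \<le> qb * zeta t" using qb_nn zpos[of t] t c by auto
      ultimately have "(qb * zeta t) * Psi t \<le> (qb * zeta t) * (Sb * (t * zeta t))" by (rule mult_left_mono)
      then show "F' t \<le> R0 * (t * (zeta t)^2) * m t" unfolding eqR eqF
        using m_pos[of t] by (intro mult_right_mono) auto
    }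
    {
      fix t assume q0: "0 < qb" and t: "t \<in> {c<..<b}"
      have "Psi t < Sb * (t * zeta t)"
        using key_ineq(2)[of a b t] a0 ab b1 t c c0 unfolding Psi_def Bc_def Sb_def Sa_def by (auto simp: mult.commute)
      moreover have "0 < qb * zeta t" using q0 zpos[of t] t c by auto
      ultimately have "(qb * zeta t) * Psi t < (qb * zeta t) * (Sb * (t * zeta t))" by (rule mult_strict_left_mono)
      then show "F' t < R0 * (t * (zeta t)^2) * m t" unfolding eqR eqF
        using m_pos[of t] by (intro mult_strict_right_mono) auto
    }
  qed
  have pt2: "\<And>t. t \<in> {c..b} \<Longrightarrow> R0 * (t * (zeta t)^2) * m t * P \<le> R0 * fI t"
  proof -
    fix t assume t: "t \<in> {c..b}"
    have "P * m t \<le> exp (H t)" using psi_ge[OF t] .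
    moreover have "0 \<le> R0 * (t * (zeta t)^2)" using R0_pos t c0 by auto
    ultimately have "R0 * (t * (zeta t)^2) * (P * m t) \<le> R0 * (t * (zeta t)^2) * exp (H t)"
      by (rule mult_left_mono)
    then show "R0 * (t * (zeta t)^2) * m t * P \<le> R0 * fI t" unfolding fI_def by (simp add: mult_ac)
  qed
  have P_pos: "0 < P" unfolding P_def by simp
  have fIcb: "fI integrable_on {c..b}" using fI_int c by auto
  have hPF: "((\<lambda>t. P * F' t) has_integral (P * Psi b)) {c..b}"
    using has_integral_mult_right[OF FTC] .
  have hRf: "((\<lambda>t. R0 * fI t) has_integral (R0 * integral {c..b} fI)) {c..b}"
    using has_integral_mult_right[OF integrable_integral[OF fIcb]] .
  have intB: "P * Psi b \<le> R0 * integral {c..b} fI"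
  proof (rule has_integral_le[OF hPF hRf])
    fix t assume t: "t \<in> {c..b}"
    have "P * F' t \<le> P * (R0 * (t * (zeta t)^2) * m t)" using pt[OF t] P_pos by simp
    also have "\<dots> \<le> R0 * fI t" using pt2[OF t] by (simp add: mult_ac)
    finally show "P * F' t \<le> R0 * fI t" .
  qed
  have intB_strict: "0 < qb \<Longrightarrow> P * Psi b < R0 * integral {c..b} fI"
  proof -
    assume q0: "0 < qb"
    have cF: "continuous_on {c..b} (\<lambda>t. P * F' t)"
    proof -
      have zc: "continuous_on {c..b} zeta" using zeta_cont c0 b1 by blast
      have Zc: "continuous_on {c..b} Zf" using Zf_cont c0 b1 by blast
      show ?thesis unfolding F'_def Psi_def m_def by (intro continuous_intros zc Zc)
    qed
    have cR: "continuous_on {c..b} (\<lambda>t. R0 * fI t)"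
      using fI_cont c by (intro continuous_intros) (auto elim: continuous_on_subset)
    have "integral {c..b} (\<lambda>t. P * F' t) < integral {c..b} (\<lambda>t. R0 * fI t)"
    proof (rule integral_less_real[OF cF cR])
      show "{c<..<b} \<noteq> {}" using cb by auto
      fix t assume t: "t \<in> {c<..<b}"
      have "P * F' t < P * (R0 * (t * (zeta t)^2) * m t)" using pts[OF q0 t] P_pos by simp
      also have "\<dots> \<le> R0 * fI t" using pt2[of t] t by (simp add: mult_ac)
      finally show "P * F' t < R0 * fI t" .
    qed
    then show ?thesis using integral_unique[OF hPF] integral_unique[OF hRf] by linarith
  qed
  have Isplit: "integral {a..c} fI + integral {c..b} fI = I"
    unfolding I_def using c fI_int[of a b] by (intro Henstock_Kurzweil_Integration.integral_combine) auto
  have Aeq: "Bc * (zeta c - zeta a) = Sa * (Sb - Sa)"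
  proof -
    have "Bc * (zeta c - zeta a) = Psi c - Psi a" unfolding Psi_def by (simp add: algebra_simps)
    then show ?thesis using c Psi_a by (simp add: algebra_simps)
  qed
  have zca: "0 \<le> zeta c - zeta a" using zeta_mono[of a c] a0 c b1 by auto
  have Ast: "Sa * (Sb - Sa) \<le> R0 * integral {a..c} fI"
  proof -
    have "Sa * (Sb - Sa) = Bc * (zeta c - zeta a)" using Aeq by simp
    also have "\<dots> \<le> R0 * (zeta c - zeta a)" using R0_ge zca by (rule mult_right_mono)
    also have "\<dots> \<le> R0 * integral {a..c} fI" using intA R0_pos by simp
    finally show ?thesis .
  qed
  have main: "(Sb - Sa) * (Sa + Sb * P) \<le> R0 * I"
  proof -
    have "(Sb - Sa) * (Sa + Sb * P) = Sa * (Sb - Sa) + P * Psi b" unfolding Psi_b by (simp add: algebra_simps)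
    also have "\<dots> \<le> R0 * integral {a..c} fI + R0 * integral {c..b} fI" using Ast intB by linarith
    also have "\<dots> = R0 * I" unfolding Isplit[symmetric] by (simp add: distrib_left)
    finally show ?thesis .
  qed
  have main_strict: "0 < qb \<Longrightarrow> (Sb - Sa) * (Sa + Sb * P) < R0 * I"
  proof -
    assume q0: "0 < qb"
    have "(Sb - Sa) * (Sa + Sb * P) = Sa * (Sb - Sa) + P * Psi b" unfolding Psi_b by (simp add: algebra_simps)
    also have "\<dots> < R0 * integral {a..c} fI + R0 * integral {c..b} fI" using Ast intB_strict[OF q0] by linarith
    also have "\<dots> = R0 * I" unfolding Isplit[symmetric] by (simp add: distrib_left)
    finally show ?thesis .
  qed
  have num_pos: "0 < (Sb - Sa) * (Sa + Sb * P)"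
    using Sa_lt Sa_nn Sb_pos P_pos by (intro mult_pos_pos) (auto intro: add_nonneg_pos)
  have I_pos: "0 < I"
  proof -
    have "0 < R0 * I" using main num_pos by linarith
    then show ?thesis using R0_pos by (simp add: zero_less_mult_iff)
  qed
  have lhs_eq: "(b * zeta b - a * zeta a) * mhat (\<lambda>t. rho t / zeta t) a b = (Sb - Sa) * (Sa + Sb * P) / I"
    unfolding mh Sa_def Sb_def by simp
  have rhs_eq: "2 + a * rho_tilde_right rho a + b * rho_tilde_left rho b = R0 + a * (qa * zeta a)"
    unfolding rho_tilde_right_def rho_tilde_left_def La Lb R0_def Bc_eq by (simp add: algebra_simps power2_eq_square)
  have extra: "0 \<le> a * (qa * zeta a)" using a0 qa_nn za by simp
  have ineq: "(Sb - Sa) * (Sa + Sb * P) / I \<le> R0" using main I_pos by (simp add: pos_divide_le_eq mult.commute)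
  have zero_iff: "(\<forall>t\<in>{a..<b}. rho t = 0) \<longleftrightarrow> qb = 0"
  proof
    assume z: "\<forall>t\<in>{a..<b}. rho t = 0"
    have "q ` {a..<b} = {0}" using z ab unfolding q_def by auto
    then show "qb = 0" unfolding qb_def by simp
  next
    assume "qb = 0"
    then show "\<forall>t\<in>{a..<b}. rho t = 0" using rho_le rnn by (metis atLeastLessThan_iff atLeastAtMost_iff less_imp_le mult_zero_left order_antisym)
  qed
  show ?thesis
  proof (cases "qb = 0")
    case False
    then have q0: "0 < qb" using qb_nn by simp
    have "(Sb - Sa) * (Sa + Sb * P) / I < R0" using main_strict[OF q0] I_pos by (simp add: pos_divide_less_eq mult.commute)
    then show ?thesis unfolding lhs_eq rhs_eq zero_iff using extra False by auto
  next
    case True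
    then have z: "\<forall>t\<in>{a..<b}. rho t = 0" using zero_iff by simp
    have qa0: "qa = 0"
    proof -
      have "qa \<le> q ((a+b)/2)" using ab by (intro qa_le_q) auto
      moreover have "q ((a+b)/2) = 0" using z ab unfolding q_def by auto
      ultimately show ?thesis using qa_nn by simp
    qed
    have H0: "\<And>x. x \<in> {a..b} \<Longrightarrow> H x = 0"
    proof -
      fix x assume x: "x \<in> {a..b}"
      have "integral {a..x} rho = integral {a..x} (\<lambda>_. 0::real)"
      proof (rule integral_spike[of "{b}"])
        show "negligible {b}" by auto
        fix s assume "s \<in> {a..x} - {b}"
        then show "0 = rho s" using z x by auto
      qed
      then show "H x = 0" unfolding H_def by simp
    qed
    have P1: "P = 1" unfolding P_def using H0[of b] ab by simp
    have "I = integral {a..b} (\<lambda>t. t * (zeta t)^2)"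
      unfolding I_def fI_def using H0 by (intro integral_cong) auto
    also have "\<dots> = zeta b - zeta a" using zeta_ftc[of a b] a0 ab b1 by (intro integral_unique) auto
    finally have I_eq: "I = zeta b - zeta a" .
    have "(Sb - Sa) * (Sa + Sb * P) = Bc * (zeta b - zeta a)"
      unfolding P1 using idt by (simp add: algebra_simps power2_eq_square)
    then have "(Sb - Sa) * (Sa + Sb * P) / I = Bc" using I_eq I_pos by simp
    moreover have "R0 + a * (qa * zeta a) = Bc" unfolding R0_def using True qa0 by simp
    ultimately show ?thesis unfolding lhs_eq rhs_eq using z by simp
  qed
qed

end
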